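(* Let $\mathfrak g$ be of type $A_n$, $i\in I$ and $b\in\mathcal B(\infty)$. If $m_i^\ast(b)=1$, then for $1\le s\le i$, $\Sigma^\ast_s(\widetilde f_i^\ast(b))=\Sigma^\ast_s(b)+1$ if $s=1$ and $\Sigma^\ast_s(\widetilde f_i^\ast(b))=\Sigma^\ast_s(b)$ otherwise. If $m_i^\ast(b)=k$ for some $k\ge2$, then $\Sigma^\ast_s(\widetilde f_i^\ast(b))$ equals $\Sigma^\ast_s(b)+2$ if $s<k$, $\Sigma^\ast_s(b)+1$ if $s=k$, and $\Sigma^\ast_s(b)$ if $s>k$. In particular $\Sigma^\ast_k(\widetilde f_i^\ast(b))=\Sigma^\ast_k(b)+1$ for $k=m_i^\ast(b)$.
   Context: $I=\{1,\dots,n\}$. $\mathcal I=\{(s,t)\in\mathbb Z_{>0}\times I:s+t\le n+1\}$; $\mathcal B(\infty)$ is the set of $b=(b_{s,t})_{(s,t)\in\mathcal I}\in\mathbb Z_{\ge0}^{\mathcal I}$ with $b_{1,k}\ge b_{2,k-1}\ge\dots\ge b_{k,1}$ for $1\le k\le n$. Convention: $b_{s,t}=0$, $\mathbf e_{s,t}=0$ for $(s,t)\notin\mathcal I$. $\partial^\ast_{s,t}(b)=b_{s-1,t}-b_{s-1,t+1}-b_{s,t-1}+b_{s,t}$. For $1\le k\le i$: $\Sigma^\ast_k(b)=\sum_{t=1}^k\partial^\ast_{t,i+1-t}(b)$; $m_i^\ast(b)$ is the smallest $k$ with $\Sigma_k^\ast(b)=\max_{1\le l\le i}\Sigma^\ast_l(b)$.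 $\widetilde f_i^\ast(b)=b+\sum_{t=1}^{m_i^\ast(b)}(\mathbf e_{t,i+1-t}-\mathbf e_{t-1,i+1-t})$. *)

theory Defs
  imports Main
begin

text \<open>Index set I_cal = {(s,t) : s > 0, 1 <= t <= n, s + t <= n + 1}.
  Elements b of B(infinity) are modelled as functions nat => nat => int,
  required to vanish outside I_cal.\<close>

definition inI :: "nat \<Rightarrow> nat \<Rightarrow> nat \<Rightarrow> bool" where
  "inI n s t \<longleftrightarrow> 0 < s \<and> 1 \<le> t \<and> t \<le> n \<and> s + t \<le> n + 1"

definition bv :: "nat \<Rightarrow> (nat \<Rightarrow> nat \<Rightarrow> int) \<Rightarrow> nat \<Rightarrow> nat \<Rightarrow> int" where
  "bv n b s t = (if inI n s t then b s t else 0)"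

definition Binf :: "nat \<Rightarrow> (nat \<Rightarrow> nat \<Rightarrow> int) set" where
  "Binf n = {b. (\<forall>s t. \<not> inI n s t \<longrightarrow> b s t = 0)
              \<and> (\<forall>s t. inI n s t \<longrightarrow> 0 \<le> b s t)
              \<and> (\<forall>k j. 1 \<le> k \<and> k \<le> n \<and> 1 \<le> j \<and> j < k \<longrightarrow>
                        b (j + 1) (k - j) \<le> b j (k + 1 - j))}"

definition partial_star :: "nat \<Rightarrow> (nat \<Rightarrow> nat \<Rightarrow> int) \<Rightarrow> nat \<Rightarrow> nat \<Rightarrow> int" where
  "partial_star n b s t =
     bv n b (s - 1) t - bv n b (s - 1) (t + 1) - bv n b s (t - 1) + bv n b s t"

definition Sigma_star :: "nat \<Rightarrow> nat \<Rightarrow> (nat \<Rightarrow> nat \<Rightarrow> int) \<Rightarrow> nat \<Rightarrow> int" where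
  "Sigma_star n i b k = (\<Sum>t = 1..k. partial_star n b t (i + 1 - t))"

definition m_star :: "nat \<Rightarrow> nat \<Rightarrow> (nat \<Rightarrow> nat \<Rightarrow> int) \<Rightarrow> nat" where
  "m_star n i b = (LEAST k. 1 \<le> k \<and> k \<le> i \<and>
       Sigma_star n i b k = Max ((\<lambda>l. Sigma_star n i b l) ` {1..i}))"

definition unit_e :: "nat \<Rightarrow> nat \<Rightarrow> nat \<Rightarrow> nat \<Rightarrow> nat \<Rightarrow> int" where
  "unit_e n s t = (\<lambda>s' t'. if inI n s t \<and> s' = s \<and> t' = t then 1 else 0)"

definition f_star :: "nat \<Rightarrow> nat \<Rightarrow> (nat \<Rightarrow> nat \<Rightarrow> int) \<Rightarrow> nat \<Rightarrow> nat \<Rightarrow> int" where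
  "f_star n i b = (\<lambda>s' t'. b s' t' + (\<Sum>t = 1..m_star n i b.
       unit_e n t (i + 1 - t) s' t' - unit_e n (t - 1) (i + 1 - t) s' t'))"

end

theory Submission
  imports Defs
begin

definition cc :: "nat \<Rightarrow> nat \<Rightarrow> int" where
 "cc m t = (if m = 1 then (if t = 1 then 1 else if t = 2 then -1 else 0)
            else (if t = 1 then 2 else if t < m then 0 else if t = m then -1 else if t = m+1 then -1 else 0))"

lemma sum1: "(\<Sum>t = 1..m. unit_e n t (i + 1 - t) s' t') =
   (if 1 \<le> s' \<and> s' \<le> m \<and> t' = i + 1 - s' \<and> inI n s' t' then 1 else 0)"
proof -
  have "(\<Sum>t = 1..m. unit_e n t (i + 1 - t) s' t') =
        (\<Sum>t = 1..m. if t = s' then (if inI n s' t' \<and> t' = i + 1 - s' then 1 else 0) else 0)"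
    by (rule sum.cong) (auto simp: unit_e_def)
  also have "\<dots> = (if 1 \<le> s' \<and> s' \<le> m \<and> t' = i + 1 - s' \<and> inI n s' t' then 1 else 0)"
    by (auto simp: sum.delta)
  finally show ?thesis .
qed

lemma sum2: "(\<Sum>t = 1..m. unit_e n (t - 1) (i + 1 - t) s' t') =
   (if 1 \<le> s' \<and> s' + 1 \<le> m \<and> t' = i - s' \<and> inI n s' t' then 1 else 0)"
proof -
  have "(\<Sum>t = 1..m. unit_e n (t - 1) (i + 1 - t) s' t') =
        (\<Sum>t = 1..m. if t = s' + 1 then (if inI n s' t' \<and> t' = i - s' then 1 else 0) else 0)"
    by (rule sum.cong) (auto simp: unit_e_def inI_def)
  also have "\<dots> = (if 1 \<le> s' \<and> s' + 1 \<le> m \<and> t' = i - s' \<and> inI n s' t' then 1 else 0)"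
    by (auto simp: sum.delta inI_def)
  finally show ?thesis .
qed

lemma fstar_eq: "f_star n i b s' t' = b s' t'
   + (if 1 \<le> s' \<and> s' \<le> m_star n i b \<and> t' = i + 1 - s' \<and> inI n s' t' then 1 else 0)
   - (if 1 \<le> s' \<and> s' + 1 \<le> m_star n i b \<and> t' = i - s' \<and> inI n s' t' then 1 else 0)"
  unfolding f_star_def sum_subtractf sum1 sum2 by simp

definition DD :: "nat \<Rightarrow> nat \<Rightarrow> nat \<Rightarrow> nat \<Rightarrow> nat \<Rightarrow> int" where
  "DD n i m s' t' = (if 1 \<le> s' \<and> s' \<le> m \<and> t' = i + 1 - s' \<and> inI n s' t' then 1 else 0)
   - (if 1 \<le> s' \<and> s' + 1 \<le> m \<and> t' = i - s' \<and> inI n s' t' then 1 else 0)"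

lemma DD1: "1 \<le> t \<Longrightarrow> t \<le> i \<Longrightarrow> m \<le> i \<Longrightarrow> i \<le> n \<Longrightarrow>
   DD n i m (t - 1) (i + 1 - t) = (if 2 \<le> t \<and> t \<le> m then -1 else 0)"
  unfolding DD_def inI_def by auto
lemma DD2: "1 \<le> t \<Longrightarrow> t \<le> i \<Longrightarrow> m \<le> i \<Longrightarrow> i \<le> n \<Longrightarrow>
   DD n i m (t - 1) (i + 1 - t + 1) = (if 2 \<le> t \<and> t \<le> m + 1 then 1 else 0)"
  unfolding DD_def inI_def by auto
lemma DD3: "1 \<le> t \<Longrightarrow> t \<le> i \<Longrightarrow> m \<le> i \<Longrightarrow> i \<le> n \<Longrightarrow>
   DD n i m t (i + 1 - t - 1) = (if t + 1 \<le> m then -1 else 0)"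
  unfolding DD_def inI_def by auto
lemma DD4: "1 \<le> t \<Longrightarrow> t \<le> i \<Longrightarrow> m \<le> i \<Longrightarrow> i \<le> n \<Longrightarrow>
   DD n i m t (i + 1 - t) = (if t \<le> m then 1 else 0)"
  unfolding DD_def inI_def by auto

lemma bv_g:
  assumes g: "\<And>s' t'. g s' t' = b s' t' + DD n i m s' t'"
  shows "bv n g s t = bv n b s t + DD n i m s t"
  unfolding bv_def g DD_def by auto

lemma partial_change:
  assumes "1 \<le> m" "m \<le> i" "i \<le> n" "1 \<le> t" "t \<le> i"
   and g: "\<And>s' t'. g s' t' = b s' t' + DD n i m s' t'"
  shows "partial_star n g t (i + 1 - t) = partial_star n b t (i + 1 - t) + cc m t"
proof -
  have "partial_star n g t (i + 1 - t) = partial_star n b t (i + 1 - t)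
     + DD n i m (t - 1) (i + 1 - t) - DD n i m (t - 1) (i + 1 - t + 1)
     - DD n i m t (i + 1 - t - 1) + DD n i m t (i + 1 - t)"
    unfolding partial_star_def bv_g[OF g] by simp
  also have "\<dots> = partial_star n b t (i + 1 - t) + cc m t"
    using assms(1-5) unfolding DD1[OF assms(4,5,2,3)] DD2[OF assms(4,5,2,3)]
      DD3[OF assms(4,5,2,3)] DD4[OF assms(4,5,2,3)] cc_def by auto
  finally show ?thesis .
qed

lemma cc_sum: "1 \<le> m \<Longrightarrow> (\<Sum>t = 1..s. cc m t) =
   (if s = 0 then 0 else if m = 1 then (if s = 1 then 1 else 0)
    else (if s < m then 2 else if s = m then 1 else 0))"
proof (induction s)
  case 0 then show ?case by simp
next
  case (Suc s) then show ?case by (cases s) (auto simp: cc_def)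
qed


lemma m_bounds:
  assumes "1 \<le> i" shows "1 \<le> m_star n i b \<and> m_star n i b \<le> i"
proof -
  let ?S = "(\<lambda>l. Sigma_star n i b l) ` {1..i}"
  have "Max ?S \<in> ?S" using assms by (intro Max_in) auto
  then obtain k where k: "k \<in> {1..i}" "Sigma_star n i b k = Max ?S" by auto
  have "1 \<le> m_star n i b \<and> m_star n i b \<le> i \<and>
       Sigma_star n i b (m_star n i b) = Max ?S"
    unfolding m_star_def by (rule LeastI[of _ k]) (use k in auto)
  then show ?thesis by blast
qed

lemma Sigma_change:
  assumes "1 \<le> i" "i \<le> n" "s \<le> i"
  shows "Sigma_star n i (f_star n i b) s = Sigma_star n i b s + (\<Sum>t = 1..s. cc (m_star n i b) t)"
proof -
  have mb: "1 \<le> m_star n i b" "m_star n i b \<le> i" using m_bounds[OF assms(1)] by auto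
  have "Sigma_star n i (f_star n i b) s = (\<Sum>t = 1..s. partial_star n b t (i + 1 - t) + cc (m_star n i b) t)"
    unfolding Sigma_star_def
    by (rule sum.cong[OF refl], rule partial_change[OF mb assms(2)]) (use assms in \<open>auto simp: fstar_eq DD_def\<close>)
  then show ?thesis by (simp add: sum.distrib Sigma_star_def)
qed

theorem lemma6p5:
  fixes n i :: nat and b :: "nat \<Rightarrow> nat \<Rightarrow> int"
  assumes "1 \<le> n" and "1 \<le> i" and "i \<le> n" and "b \<in> Binf n"
  shows "(m_star n i b = 1 \<longrightarrow>
            (\<forall>s. 1 \<le> s \<and> s \<le> i \<longrightarrow>
               Sigma_star n i (f_star n i b) s =
                 Sigma_star n i b s + (if s = 1 then 1 else 0)))
       \<and> (\<forall>k. 2 \<le> k \<and> m_star n i b = k \<longrightarrow>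
            (\<forall>s. 1 \<le> s \<and> s \<le> i \<longrightarrow>
               Sigma_star n i (f_star n i b) s =
                 Sigma_star n i b s + (if s < k then 2 else if s = k then 1 else 0)))
       \<and> Sigma_star n i (f_star n i b) (m_star n i b) = Sigma_star n i b (m_star n i b) + 1"
proof -
  have mb: "1 \<le> m_star n i b" "m_star n i b \<le> i" using m_bounds[OF assms(2)] by auto
  have key: "\<And>s. s \<le> i \<Longrightarrow> Sigma_star n i (f_star n i b) s = Sigma_star n i b s +
    (if s = 0 then 0 else if m_star n i b = 1 then (if s = 1 then 1 else 0)
    else (if s < m_star n i b then 2 else if s = m_star n i b then 1 else 0))"
    using Sigma_change[OF assms(2,3)] cc_sum[OF mb(1)] by simp
  show ?thesis using key mb by auto
qed

end
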